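(* The transformation $\mathcal{A}_2$ is an Upsilon transformation with dilation measure $\tau(\mathrm{d}u)=a_1(u;1)\mathrm{d}u$; that is, for $\nu\in\mathfrak{M}_L^2(\mathbb{R}^d)$, $\widetilde\nu=\mathcal{A}_2(\nu)$ satisfies $\widetilde\nu(B)=\mathrm{E}[\nu(A^{-1}B)]$ for all Borel $B\subset\mathbb{R}^d$, where $A$ is a random variable with density $a_1(u;1)$.
   Context: A Lévy measure on $\mathbb{R}^d$ is a measure $\nu$ with $\nu(\{0\})=0$ and $\int(1\wedge|x|^2)\nu(\mathrm{d}x)<\infty$; their class is $\mathfrak{M}_L^2(\mathbb{R}^d)$. For $s>0$ set $a_1(r;s)=2\pi^{-1}(s-r^2)^{-1/2}$ for $0<r<s^{1/2}$ and $0$ otherwise; $a_2(r;s)=2\pi^{-1}(s^2-r^2)^{-1/2}$ for $0<r<s$ and $0$ otherwise. $\mathcal{A}_2(\nu)(B)=\int_{\mathbb{R}^d\setminus\{0\}}\nu(\mathrm{d}x)\int_0^\infty a_2(r;|x|)1_B(rx/|x|)\,\mathrm{d}r$. For a measure $\tau$ on $(0,\infty)$, the Upsilon transformation with dilation measure $\tau$ is $\Upsilon_\tau(\nu)(B)=\int_0^\infty\nu(u^{-1}B)\tau(\mathrm{d}u)$, where $u^{-1}B=\{u^{-1}x:x\in B\}$. *)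

theory Defs
  imports "HOL-Analysis.Analysis"
begin

definition levy_measure :: "'a::euclidean_space measure \<Rightarrow> bool" where
  "levy_measure \<nu> \<longleftrightarrow> sets \<nu> = sets borel \<and> emeasure \<nu> {0} = 0 \<and>
     (\<integral>\<^sup>+ x. ennreal (min 1 (norm x ^ 2)) \<partial>\<nu>) < \<infinity>"

definition a1 :: "real \<Rightarrow> real \<Rightarrow> real" where
  "a1 r s = (if 0 < r \<and> r < sqrt s then 2 / pi * (s - r\<^sup>2) powr (-1/2) else 0)"

definition a2 :: "real \<Rightarrow> real \<Rightarrow> real" where
  "a2 r s = (if 0 < r \<and> r < s then 2 / pi * (s\<^sup>2 - r\<^sup>2) powr (-1/2) else 0)"

definition A2 :: "'a::euclidean_space measure \<Rightarrow> 'a set \<Rightarrow> ennreal" where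
  "A2 \<nu> B = (\<integral>\<^sup>+ x \<in> UNIV - {0}.
      (\<integral>\<^sup>+ r \<in> {0<..}. ennreal (a2 r (norm x)) * indicator B (r *\<^sub>R (x /\<^sub>R norm x)) \<partial>lborel) \<partial>\<nu>)"

definition Upsilon :: "real measure \<Rightarrow> 'a::euclidean_space measure \<Rightarrow> 'a set \<Rightarrow> ennreal" where
  "Upsilon \<tau> \<nu> B = (\<integral>\<^sup>+ u \<in> {0<..}. emeasure \<nu> ((\<lambda>x. inverse u *\<^sub>R x) ` B) \<partial>\<tau>)"

end

theory Submission
  imports Defs
begin

lemma a1_meas[measurable]: "(\<lambda>u. a1 u s) \<in> borel_measurable borel"
  unfolding a1_def by measurable

lemma a2_meas[measurable]: "(\<lambda>u. a2 u s) \<in> borel_measurable borel"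
  unfolding a2_def by measurable

lemma joint_meas:
  fixes B :: "'a::euclidean_space set"
  assumes [measurable]: "B \<in> sets borel"
  shows "(\<lambda>(u::real, x::'a). ennreal (a1 u 1) * indicator B (u *\<^sub>R x)) \<in> borel_measurable (borel \<Otimes>\<^sub>M borel)"
  by measurable

lemma levy_sigma_finite:
  fixes \<nu> :: "'a::euclidean_space measure"
  assumes "levy_measure \<nu>"
  shows "sigma_finite_measure \<nu>"
proof
  have sets: "sets \<nu> = sets borel" and z: "emeasure \<nu> {0} = 0"
    and fin: "(\<integral>\<^sup>+ x. ennreal (min 1 (norm x ^ 2)) \<partial>\<nu>) < \<infinity>"
    using assms unfolding levy_measure_def by auto
  have sp: "space \<nu> = UNIV" using sets_eq_imp_space_eq[OF sets] by simp
  define S where "S n = {x::'a. 1 / real (Suc n) < norm x}" for n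
  have Sb: "S n \<in> sets \<nu>" for n unfolding sets S_def by measurable
  have Sfin: "emeasure \<nu> (S n) \<noteq> \<infinity>" for n
  proof -
    have "emeasure \<nu> (S n) = (\<integral>\<^sup>+ x. indicator (S n) x \<partial>\<nu>)" using Sb by simp
    also have "\<dots> \<le> (\<integral>\<^sup>+ x. ennreal (real (Suc n) ^ 2) * ennreal (min 1 (norm x ^ 2)) \<partial>\<nu>)"
    proof (rule nn_integral_mono)
      fix x assume "x \<in> space \<nu>"
      show "indicator (S n) x \<le> ennreal (real (Suc n) ^ 2) * ennreal (min 1 (norm x ^ 2))"
      proof (cases "x \<in> S n")
        case True
        then have h: "1 < real (Suc n) * norm x" unfolding S_def
          by (simp add: field_simps)
        have "1 \<le> real (Suc n) ^ 2 * min 1 (norm x ^ 2)"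
        proof (cases "norm x \<le> 1")
          case True
          have "1 < (real (Suc n) * norm x)^2" using h
            by (metis less_1_mult one_less_power zero_less_numeral power2_eq_square)
          moreover have "norm x ^ 2 \<le> 1" using True by (simp add: power_le_one)
          ultimately show ?thesis by (simp add: power_mult_distrib min_def)
        next
          case False
          then have "min 1 (norm x ^ 2) = 1" by (simp add: min_def)
          then show ?thesis by simp
        qed
        then have "ennreal 1 \<le> ennreal (real (Suc n) ^ 2 * min 1 (norm x ^ 2))" using ennreal_leI by blast
        then show ?thesis using True by (simp add: ennreal_mult'[symmetric] del: of_nat_Suc)
      qed simp
    qed
    also have "\<dots> = ennreal (real (Suc n) ^ 2) * (\<integral>\<^sup>+ x. ennreal (min 1 (norm x ^ 2)) \<partial>\<nu>)"
      by (rule nn_integral_cmult) (simp add: measurable_cong_sets[OF sets refl])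
    also have "\<dots> < \<infinity>" using fin by (simp add: ennreal_mult_less_top)
    finally show ?thesis by simp
  qed
  show "\<exists>A. countable A \<and> A \<subseteq> sets \<nu> \<and> \<Union> A = space \<nu> \<and> (\<forall>a\<in>A. emeasure \<nu> a \<noteq> \<infinity>)"
  proof (intro exI[of _ "insert {0} (range S)"] conjI)
    show "countable (insert {0} (range S))" by simp
    show "insert {0} (range S) \<subseteq> sets \<nu>" using Sb sets by auto
    show "\<Union> (insert {0} (range S)) = space \<nu>"
    proof -
      have "x \<in> \<Union> (range S)" if "x \<noteq> 0" for x
      proof -
        obtain n :: nat where "inverse (norm x) < real n" using reals_Archimedean2 by blast
        then have "inverse (norm x) < real (Suc n)" by simp
        moreover have "0 < norm x" using that by simp
        ultimately have "1 / real (Suc n) < norm x"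
          by (simp add: field_simps)
        then show ?thesis unfolding S_def by auto
      qed
      then show ?thesis using sp by auto
    qed
    show "\<forall>a\<in>insert {0} (range S). emeasure \<nu> a \<noteq> \<infinity>" using z Sfin by auto
  qed
qed

lemma a2_scale:
  assumes n: "0 < n"
  shows "n * a2 (n * u) n = a1 u 1"
proof (cases "0 < u \<and> u < 1")
  case True
  have "(n\<^sup>2 - (n * u)\<^sup>2) = n\<^sup>2 * (1 - u\<^sup>2)" by (simp add: algebra_simps power_mult_distrib)
  moreover have "(n\<^sup>2 * (1 - u\<^sup>2)) powr (-1/2) = n\<^sup>2 powr (-1/2) * (1 - u\<^sup>2) powr (-1/2)"
    using True by (simp add: powr_mult)
  moreover have "n\<^sup>2 powr (-1/2) = inverse n"
  proof -
    have "n\<^sup>2 powr (-1/2) = (n powr 2) powr (-1/2)" using n by (simp add: powr_realpow)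
    also have "\<dots> = n powr (-1)" by (simp add: powr_powr)
    also have "\<dots> = inverse n" using n by (simp add: powr_minus)
    finally show ?thesis .
  qed
  moreover have "0 < n * u" "n * u < n" using True n by auto
  ultimately show ?thesis using True n unfolding a1_def a2_def by (simp add: field_simps)
next
  case False
  then have "\<not> (0 < n * u \<and> n * u < n)" using n
    by (auto simp: zero_less_mult_iff)
  then show ?thesis using False unfolding a1_def a2_def by auto
qed

lemma inner_subst:
  fixes x :: "'a::euclidean_space"
  assumes x: "x \<noteq> 0" and [measurable]: "B \<in> sets borel"
  shows "(\<integral>\<^sup>+ r \<in> {0<..}. ennreal (a2 r (norm x)) * indicator B (r *\<^sub>R (x /\<^sub>R norm x)) \<partial>lborel)
     = (\<integral>\<^sup>+ u. ennreal (a1 u 1) * indicator B (u *\<^sub>R x) \<partial>lborel)"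
proof -
  let ?n = "norm x"
  have n: "0 < ?n" using x by simp
  have "(\<integral>\<^sup>+ r \<in> {0<..}. ennreal (a2 r ?n) * indicator B (r *\<^sub>R (x /\<^sub>R ?n)) \<partial>lborel)
      = ennreal \<bar>?n\<bar> * (\<integral>\<^sup>+ u. ennreal (a2 (0 + ?n * u) ?n) * indicator B ((0 + ?n * u) *\<^sub>R (x /\<^sub>R ?n)) * indicator {0<..} (0 + ?n * u) \<partial>lborel)"
    by (rule nn_integral_real_affine) (use n in auto)
  also have "\<dots> = (\<integral>\<^sup>+ u. ennreal \<bar>?n\<bar> * (ennreal (a2 (0 + ?n * u) ?n) * indicator B ((0 + ?n * u) *\<^sub>R (x /\<^sub>R ?n)) * indicator {0<..} (0 + ?n * u)) \<partial>lborel)"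
    by (rule nn_integral_cmult[symmetric]) measurable
  also have "\<dots> = (\<integral>\<^sup>+ u. ennreal (a1 u 1) * indicator B (u *\<^sub>R x) \<partial>lborel)"
  proof (rule nn_integral_cong)
    fix u :: real
    have e: "(0 + ?n * u) *\<^sub>R (x /\<^sub>R ?n) = u *\<^sub>R x" using n by simp
    have a2nn: "0 \<le> a2 (?n * u) ?n" unfolding a2_def by auto
    have "ennreal \<bar>?n\<bar> * ennreal (a2 (?n * u) ?n) = ennreal (a1 u 1)"
      using a2_scale[OF n, of u] a2nn n by (simp add: ennreal_mult[symmetric])
    moreover have "a2 (?n * u) ?n = 0" if "\<not> 0 < ?n * u" using that unfolding a2_def by auto
    ultimately show "ennreal \<bar>?n\<bar> * (ennreal (a2 (0 + ?n * u) ?n) * indicator B ((0 + ?n * u) *\<^sub>R (x /\<^sub>R ?n)) * indicator {0<..} (0 + ?n * u)) = ennreal (a1 u 1) * indicator B (u *\<^sub>R x)"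
      unfolding e by (cases "0 < ?n * u") (auto simp: mult.assoc[symmetric])
  qed
  finally show ?thesis .
qed


theorem corollary2p14:
  fixes \<nu> :: "'a::euclidean_space measure"
  assumes "levy_measure \<nu>"
    and "B \<in> sets borel"
  shows "A2 \<nu> B = Upsilon (density lborel (\<lambda>u. ennreal (a1 u 1))) \<nu> B"
proof -
  note Bm[measurable] = assms(2)
  have sets: "sets \<nu> = sets borel" and z: "emeasure \<nu> {0} = 0"
    using assms(1) unfolding levy_measure_def by auto
  interpret nu: sigma_finite_measure \<nu> using levy_sigma_finite[OF assms(1)] .
  interpret pair_sigma_finite lborel \<nu> ..
  have sp: "space \<nu> = UNIV" using sets_eq_imp_space_eq[OF sets] by simp
  define f where "f u x = ennreal (a1 u 1) * indicator B (u *\<^sub>R x)" for u :: real and x :: 'a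
  have fm: "case_prod f \<in> borel_measurable (lborel \<Otimes>\<^sub>M \<nu>)"
  proof -
    have "sets (lborel \<Otimes>\<^sub>M \<nu>) = sets (borel \<Otimes>\<^sub>M borel)"
      by (rule sets_pair_measure_cong) (auto simp: sets)
    then show ?thesis unfolding f_def
      using measurable_cong_sets[OF _ refl] joint_meas[OF Bm] by blast
  qed
  have fxm: "(\<lambda>x. indicator B (u *\<^sub>R x) :: ennreal) \<in> borel_measurable \<nu>" for u :: real
  proof -
    have "(\<lambda>x. indicator B (u *\<^sub>R x) :: ennreal) \<in> borel_measurable borel" by measurable
    then show ?thesis by (simp add: measurable_cong_sets[OF sets refl])
  qed
  have "A2 \<nu> B = (\<integral>\<^sup>+ x. (\<integral>\<^sup>+ u. f u x \<partial>lborel) \<partial>\<nu>)"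
    unfolding A2_def
  proof (rule nn_integral_cong_AE)
    have "AE x in \<nu>. x \<noteq> 0"
      by (rule AE_I'[of "{0}"]) (use z sets in auto)
    then show "AE x in \<nu>. (\<integral>\<^sup>+ r \<in> {0<..}. ennreal (a2 r (norm x)) * indicator B (r *\<^sub>R (x /\<^sub>R norm x)) \<partial>lborel) * indicator (UNIV - {0}) x = (\<integral>\<^sup>+ u. f u x \<partial>lborel)"
      proof eventually_elim
      case (elim x)
      show ?case using inner_subst[OF elim Bm] elim unfolding f_def by simp
    qed
  qed
  also have "\<dots> = (\<integral>\<^sup>+ u. (\<integral>\<^sup>+ x. f u x \<partial>\<nu>) \<partial>lborel)"
    using Fubini'[OF fm] by simp
  also have "\<dots> = (\<integral>\<^sup>+ u. ennreal (a1 u 1) * (indicator {0<..} u * (\<integral>\<^sup>+ x. indicator B (u *\<^sub>R x) \<partial>\<nu>)) \<partial>lborel)"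
  proof (rule nn_integral_cong)
    fix u :: real
    have "(\<integral>\<^sup>+ x. f u x \<partial>\<nu>) = ennreal (a1 u 1) * (\<integral>\<^sup>+ x. indicator B (u *\<^sub>R x) \<partial>\<nu>)"
      unfolding f_def by (rule nn_integral_cmult) (rule fxm)
    moreover have "a1 u 1 = 0" if "\<not> 0 < u" using that unfolding a1_def by auto
    ultimately show "(\<integral>\<^sup>+ x. f u x \<partial>\<nu>) = ennreal (a1 u 1) * (indicator {0<..} u * (\<integral>\<^sup>+ x. indicator B (u *\<^sub>R x) \<partial>\<nu>))"
      by (cases "0 < u") auto
  qed
  also have "\<dots> = (\<integral>\<^sup>+ u. indicator {0<..} u * (\<integral>\<^sup>+ x. indicator B (u *\<^sub>R x) \<partial>\<nu>) \<partial>density lborel (\<lambda>u. ennreal (a1 u 1)))"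
  proof (rule nn_integral_density[symmetric])
    show "(\<lambda>u. ennreal (a1 u 1)) \<in> borel_measurable lborel" by measurable
    have "(\<lambda>u. \<integral>\<^sup>+ x. f u x \<partial>\<nu>) \<in> borel_measurable lborel"
      using nu.borel_measurable_nn_integral_fst[of "case_prod f" lborel] fm by simp
    have "(\<lambda>u. \<integral>\<^sup>+ x. indicator B (u *\<^sub>R x) \<partial>\<nu>) \<in> borel_measurable lborel"
    proof -
      have m: "(\<lambda>(u::real, x::'a). indicator B (u *\<^sub>R x) :: ennreal) \<in> borel_measurable (lborel \<Otimes>\<^sub>M \<nu>)"
      proof -
        have "sets (lborel \<Otimes>\<^sub>M \<nu>) = sets (borel \<Otimes>\<^sub>M borel)"
          by (rule sets_pair_measure_cong) (auto simp: sets)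
        moreover have "(\<lambda>(u::real, x::'a). indicator B (u *\<^sub>R x) :: ennreal) \<in> borel_measurable (borel \<Otimes>\<^sub>M borel)"
          by measurable
        ultimately show ?thesis using measurable_cong_sets[OF _ refl] by blast
      qed
      show ?thesis using nu.borel_measurable_nn_integral_fst[OF m] by simp
    qed
    then show "(\<lambda>u. indicator {0<..} u * (\<integral>\<^sup>+ x. indicator B (u *\<^sub>R x) \<partial>\<nu>)) \<in> borel_measurable lborel"
      by measurable
  qed
  also have "\<dots> = Upsilon (density lborel (\<lambda>u. ennreal (a1 u 1))) \<nu> B"
    unfolding Upsilon_def
  proof (rule nn_integral_cong)
    fix u :: real
    show "indicator {0<..} u * (\<integral>\<^sup>+ x. indicator B (u *\<^sub>R x) \<partial>\<nu>) = emeasure \<nu> ((\<lambda>x. inverse u *\<^sub>R x) ` B) * indicator {0<..} u"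
    proof (cases "0 < u")
      case True
      have img: "(\<lambda>x. inverse u *\<^sub>R x) ` B = (\<lambda>x. u *\<^sub>R x) -` B"
      proof
        show "(\<lambda>x. inverse u *\<^sub>R x) ` B \<subseteq> (\<lambda>x. u *\<^sub>R x) -` B" using True by auto
        show "(\<lambda>x. u *\<^sub>R x) -` B \<subseteq> (\<lambda>x. inverse u *\<^sub>R x) ` B"
        proof
          fix y assume "y \<in> (\<lambda>x. u *\<^sub>R x) -` B"
          then have "u *\<^sub>R y \<in> B" by simp
          moreover have "y = inverse u *\<^sub>R (u *\<^sub>R y)" using True by simp
          ultimately show "y \<in> (\<lambda>x. inverse u *\<^sub>R x) ` B" by blast
        qed
      qed
      have vm: "(\<lambda>x. u *\<^sub>R x) -` B \<in> sets \<nu>"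
      proof -
        have "(\<lambda>x::'a. u *\<^sub>R x) -` B \<inter> space borel \<in> sets borel"
          by (rule measurable_sets[OF _ Bm]) measurable
        then show ?thesis using sets by simp
      qed
      have "(\<integral>\<^sup>+ x. indicator B (u *\<^sub>R x) \<partial>\<nu>) = (\<integral>\<^sup>+ x. indicator ((\<lambda>x. u *\<^sub>R x) -` B) x \<partial>\<nu>)"
        by (simp add: indicator_def)
      also have "\<dots> = emeasure \<nu> ((\<lambda>x. u *\<^sub>R x) -` B)" using vm by simp
      finally show ?thesis using True img by (simp add: mult.commute)
    qed simp
  qed
  finally show ?thesis .
qed

end
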